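(* Let $\boldsymbol{\beta}=(\beta_1,\dots,\beta_p)$ be an alternate base and $\delta=\prod_{i=1}^p\beta_i$. Suppose there exists $\gamma>0$ such that every rational number in $[0,\gamma)$ has an eventually periodic $\boldsymbol{\beta}$-expansion. Then $\delta$ is an algebraic integer.
   Context: An alternate base is a $p$-tuple $\boldsymbol{\beta}=(\beta_1,\dots,\beta_p)$ of reals $\beta_i>1$, identified with the purely periodic sequence $(\beta_k)_{k\ge1}$, $\beta_{k+p}=\beta_k$. For $x\in[0,1)$ the $\boldsymbol{\beta}$-expansion $d_{\boldsymbol{\beta}}(x)=a_1a_2\cdots$ is given by the greedy algorithm $r_0=x$, $a_{k+1}=\lfloor\beta_{k+1}r_k\rfloor$, $r_{k+1}=\beta_{k+1}r_k-a_{k+1}$, so $x=\sum_{k\ge1}a_k/\prod_{i=1}^k\beta_i$. *)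

theory Defs
  imports "HOL-Analysis.Analysis" "HOL-Computational_Algebra.Polynomial"
begin

text \<open>An alternate base is a nonempty list bs = [beta_1, ..., beta_p] of reals > 1,
  identified with the periodic sequence beta_k = bs ! ((k-1) mod p), k >= 1.\<close>

definition alt_base :: "real list \<Rightarrow> bool" where
  "alt_base bs \<longleftrightarrow> bs \<noteq> [] \<and> (\<forall>b\<in>set bs. b > 1)"

text \<open>alt_beta bs k = beta_(k+1), i.e. 0-based indexing of the periodic sequence.\<close>
definition alt_beta :: "real list \<Rightarrow> nat \<Rightarrow> real" where
  "alt_beta bs k = bs ! (k mod length bs)"

fun alt_rem :: "real list \<Rightarrow> real \<Rightarrow> nat \<Rightarrow> real" where
  "alt_rem bs x 0 = x"
| "alt_rem bs x (Suc k) = alt_beta bs k * alt_rem bs x k - of_int \<lfloor>alt_beta bs k * alt_rem bs x k\<rfloor>"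

text \<open>Digits: alt_digit bs x k = a_(k+1) = floor(beta_(k+1) r_k).\<close>
definition alt_digit :: "real list \<Rightarrow> real \<Rightarrow> nat \<Rightarrow> int" where
  "alt_digit bs x k = \<lfloor>alt_beta bs k * alt_rem bs x k\<rfloor>"

definition eventually_periodic :: "(nat \<Rightarrow> 'a) \<Rightarrow> bool" where
  "eventually_periodic a \<longleftrightarrow> (\<exists>N T. T > 0 \<and> (\<forall>n\<ge>N. a (n + T) = a n))"

end

theory Submission imports Defs "Jordan_Normal_Form.Char_Poly" begin

definition zspan :: "real set \<Rightarrow> real set" where
  "zspan G = {y. \<exists>c::real\<Rightarrow>int. y = (\<Sum>g\<in>G. of_int (c g) * g)}"

lemma module_algebraic_int:
  fixes G :: "real set" and d :: real
  assumes fin: "finite G" and cl: "\<And>g. g \<in> G \<Longrightarrow> d * g \<in> zspan G"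
    and nz: "g0 \<in> G" "g0 \<noteq> 0"
  shows "algebraic_int d"
proof -
  obtain xs where xs: "distinct xs" "set xs = G" using finite_distinct_list[OF fin] by blast
  define m where "m = length xs"
  have sumG: "(\<Sum>g\<in>G. h g) = (\<Sum>j\<in>{0..<m}. h (xs!j))" for h :: "real \<Rightarrow> real"
  proof -
    have "(\<Sum>g\<in>G. h g) = sum_list (map h xs)" using sum.distinct_set_conv_list[OF xs(1), of h] xs(2) by simp
    also have "\<dots> = (\<Sum>j\<in>{0..<m}. map h xs ! j)" by (simp add: sum_list_sum_nth m_def)
    also have "\<dots> = (\<Sum>j\<in>{0..<m}. h (xs!j))" by (intro sum.cong) (auto simp: m_def)
    finally show ?thesis .
  qed
  have "\<forall>i\<in>{..<m}. \<exists>c::real\<Rightarrow>int. d * xs!i = (\<Sum>g\<in>G. of_int (c g) * g)"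
    using cl xs unfolding zspan_def m_def by auto
  then obtain f where f: "\<forall>i\<in>{..<m}. d * xs!i = (\<Sum>g\<in>G. of_int (f i g) * g)"
    by (metis (no_types) bchoice)
  define A :: "int mat" where "A = Matrix.mat m m (\<lambda>(i,j). f i (xs!j))"
  define B :: "real mat" where "B = map_mat of_int A"
  define v :: "real vec" where "v = Matrix.vec m (\<lambda>j. xs!j)"
  have A: "A \<in> carrier_mat m m" unfolding A_def by auto
  have B: "B \<in> carrier_mat m m" unfolding B_def using A by auto
  have Bv: "B *\<^sub>v v = d \<cdot>\<^sub>v v"
  proof (rule eq_vecI)
    fix i assume i: "i < dim_vec (d \<cdot>\<^sub>v v)"
    hence im: "i < m" by (simp add: v_def)
    have "(B *\<^sub>v v) $ i = (\<Sum>j\<in>{0..<m}. B $$ (i,j) * v $ j)"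
      using im B unfolding v_def by (simp add: mult_mat_vec_def scalar_prod_def)
    also have "\<dots> = (\<Sum>j\<in>{0..<m}. of_int (f i (xs!j)) * xs!j)"
      using im by (intro sum.cong) (auto simp: B_def A_def v_def)
    also have "\<dots> = d * xs!i" using f im sumG[of "\<lambda>g. of_int (f i g) * g"] by auto
    also have "\<dots> = (d \<cdot>\<^sub>v v) $ i" using im by (simp add: v_def)
    finally show "(B *\<^sub>v v) $ i = (d \<cdot>\<^sub>v v) $ i" .
  qed (auto simp: v_def B_def A_def)
  obtain i where i: "i < m" "xs!i = g0" using nz xs unfolding m_def by (metis in_set_conv_nth)
  have vnz: "v \<noteq> 0\<^sub>v m"
  proof
    assume "v = 0\<^sub>v m"
    hence "v $ i = 0" using i by simp
    thus False using i nz by (simp add: v_def)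
  qed
  have "eigenvector B v d" unfolding eigenvector_def using B Bv vnz by (auto simp: v_def)
  hence "eigenvalue B d" unfolding eigenvalue_def by blast
  hence "poly (char_poly B) d = 0" using eigenvalue_root_char_poly[OF B] by simp
  moreover have "char_poly B = of_int_poly (char_poly A)"
    unfolding B_def using of_int_hom.char_poly_hom[OF A] by simp
  moreover have "lead_coeff (char_poly A) = 1" using degree_monic_char_poly[OF A] by simp
  ultimately show ?thesis unfolding algebraic_int_altdef_ipoly by metis
qed

lemma beta_in: "alt_base bs \<Longrightarrow> alt_beta bs k \<in> set bs"
  unfolding alt_base_def alt_beta_def by auto

lemma beta_ge_min: "alt_base bs \<Longrightarrow> Min (set bs) \<le> alt_beta bs k"
  using beta_in by (intro Min_le) auto

lemma min_gt1: "alt_base bs \<Longrightarrow> Min (set bs) > 1"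
  unfolding alt_base_def by (subst Min_gr_iff) auto

lemma beta_gt1: assumes "alt_base bs" shows "alt_beta bs k > 1"
  using beta_ge_min[OF assms, of k] min_gt1[OF assms] by linarith

lemma beta_mod: "alt_beta bs (j mod length bs) = alt_beta bs j"
  unfolding alt_beta_def by simp

lemma beta_cong: "j mod length bs = n mod length bs \<Longrightarrow> alt_beta bs j = alt_beta bs n"
  unfolding alt_beta_def by simp

lemma rem_range: "0 \<le> x \<Longrightarrow> x < 1 \<Longrightarrow> 0 \<le> alt_rem bs x n \<and> alt_rem bs x n < 1"
proof (induction n)
  case (Suc n)
  show ?case by simp linarith
qed simp

lemma rem_step: "alt_beta bs n * alt_rem bs x n = alt_rem bs x (Suc n) + of_int (alt_digit bs x n)"
  by (simp add: alt_digit_def)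

lemma rem_periodic:
  assumes ab: "alt_base bs" and x: "0 \<le> x" "x < 1" and ep: "eventually_periodic (alt_digit bs x)"
  shows "finite (range (alt_rem bs x))"
proof -
  define p where "p = length bs"
  have p0: "p > 0" using ab unfolding alt_base_def p_def by auto
  define b where "b = Min (set bs)"
  have b1: "b > 1" using min_gt1[OF ab] b_def by simp
  have bb: "alt_beta bs k \<ge> b" for k using beta_ge_min[OF ab] b_def by simp
  define a where "a = alt_digit bs x"
  define r where "r = alt_rem bs x"
  obtain N T where T: "T > 0" "\<forall>n\<ge>N. a (n + T) = a n"
    using ep unfolding eventually_periodic_def a_def by blast
  define P where "P = p * T"
  have aj: "a (n + j * T) = a n" if "n \<ge> N" for n j
  proof (induction j)
    case (Suc j)
    have "a (n + Suc j * T) = a ((n + j * T) + T)" by (simp add: algebra_simps)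
    also have "\<dots> = a (n + j*T)" using T that by auto
    finally show ?case using Suc by simp
  qed simp
  have aP: "a (n + P) = a n" if "n \<ge> N" for n
    using aj[OF that, of p] unfolding P_def by (simp add: mult.commute)
  have bP: "alt_beta bs (n + P) = alt_beta bs n" for n
    by (rule beta_cong) (simp add: P_def p_def)
  have rr: "0 \<le> r k \<and> r k < 1" for k using rem_range[OF x] r_def by simp
  have rP: "r (n + P) = r n" if nN: "n \<ge> N" for n
  proof (rule ccontr)
    assume ne: "r (n + P) \<noteq> r n"
    define D where "D k = r (n + k) - r (n + P + k)" for k
    have D0: "D 0 \<noteq> 0" using ne by (simp add: D_def)
    have DS: "D (Suc k) = alt_beta bs (n + k) * D k" for k
    proof -
      have e1: "r (n + Suc k) = alt_beta bs (n+k) * r (n+k) - a (n+k)"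
        using rem_step[of bs "n+k" x] unfolding r_def a_def by simp
      have e2: "r (n + P + Suc k) = alt_beta bs (n+k) * r (n+P+k) - a (n+k)"
        using rem_step[of bs "n+P+k" x] aP[of "n+k"] bP[of "n+k"] nN unfolding r_def a_def
        by (simp add: algebra_simps)
      show ?thesis unfolding D_def using e1 e2 by (simp add: algebra_simps)
    qed
    have Dk: "\<bar>D k\<bar> \<ge> b ^ k * \<bar>D 0\<bar>" for k
    proof (induction k)
      case (Suc k)
      have "b ^ Suc k * \<bar>D 0\<bar> = b * (b ^ k * \<bar>D 0\<bar>)" by simp
      also have "\<dots> \<le> alt_beta bs (n+k) * \<bar>D k\<bar>"
        using Suc bb[of "n+k"] b1 by (intro mult_mono) auto
      also have "\<dots> = \<bar>D (Suc k)\<bar>" using DS[of k] bb[of "n+k"] b1 by (simp add: abs_mult)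
      finally show ?case .
    qed simp
    obtain k where k: "1 / \<bar>D 0\<bar> < b ^ k" using real_arch_pow[OF b1] by blast
    have "1 < b ^ k * \<bar>D 0\<bar>" using k D0 by (simp add: field_simps)
    also have "\<dots> \<le> \<bar>D k\<bar>" by (rule Dk)
    also have "\<dots> < 1" using rr[of "n+k"] rr[of "n+P+k"] unfolding D_def by auto
    finally have "(1::real) < 1" .
    thus False by simp
  qed
  have P0: "P > 0" using p0 T by (simp add: P_def)
  have "r k \<in> r ` {..<N+P}" for k
  proof (induction k rule: less_induct)
    case (less k)
    show ?case
    proof (cases "k < N + P")
      case True thus ?thesis by auto
    next
      case False
      hence "r k = r (k - P)" using rP[of "k - P"] by simp
      moreover have "r (k - P) \<in> r ` {..<N+P}" using less P0 False by auto
      ultimately show ?thesis by simp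
    qed
  qed
  hence "range r \<subseteq> r ` {..<N+P}" by blast
  thus ?thesis using finite_subset unfolding r_def by blast
qed

definition H :: "real list \<Rightarrow> nat \<Rightarrow> real" where
  "H bs k = (\<Prod>i<k. alt_beta bs i)"

lemma H_pos: assumes "alt_base bs" shows "H bs k > 0"
proof -
  have "alt_beta bs i > 0" for i using beta_gt1[OF assms, of i] by linarith
  thus ?thesis unfolding H_def by (intro prod_pos) auto
qed

lemma H_Suc: "H bs (Suc k) = H bs k * alt_beta bs k"
  unfolding H_def by simp

lemma H_mono: assumes "alt_base bs" "k \<le> n" shows "H bs k \<le> H bs n"
proof -
  have "incseq (H bs)"
  proof (rule incseq_SucI)
    fix k show "H bs k \<le> H bs (Suc k)"
      using H_pos[OF assms(1), of k] beta_gt1[OF assms(1), of k] by (simp add: H_Suc)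
  qed
  thus ?thesis using assms(2) by (simp add: incseq_def)
qed

lemma H_ge_pow: assumes "alt_base bs" shows "H bs k \<ge> Min (set bs) ^ k"
proof (induction k)
  case (Suc k)
  have "Min (set bs) ^ Suc k = Min (set bs) * Min (set bs) ^ k" by simp
  also have "\<dots> \<le> alt_beta bs k * H bs k"
    using Suc min_gt1[OF assms] beta_ge_min[OF assms, of k] by (intro mult_mono) auto
  finally show ?case by (simp add: H_Suc mult.commute)
qed (simp add: H_def)

lemma rem_small:
  assumes ab: "alt_base bs" and x: "0 \<le> x" and Hn: "H bs n * x < 1" and kn: "k \<le> n"
  shows "alt_rem bs x k = H bs k * x"
  using kn
proof (induction k)
  case 0 thus ?case by (simp add: H_def)
next
  case (Suc k)
  have "H bs (Suc k) * x \<le> H bs n * x" using H_mono[OF ab Suc.prems] x by (intro mult_right_mono)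
  hence lt: "H bs (Suc k) * x < 1" using Hn by linarith
  have ge: "H bs (Suc k) * x \<ge> 0" using H_pos[OF ab, of "Suc k"] x by simp
  have eq: "alt_beta bs k * alt_rem bs x k = H bs (Suc k) * x"
    using Suc by (simp add: H_Suc)
  have "\<lfloor>H bs (Suc k) * x\<rfloor> = 0" using lt ge by (simp add: floor_eq_iff)
  thus ?case using eq by simp
qed

lemma rem_one:
  assumes ab: "alt_base bs" and x: "0 \<le> x" and Hn: "H bs n * x < 1"
    and l: "1 \<le> H bs (Suc n) * x" and u: "H bs (Suc n) * x < 2"
  shows "alt_rem bs x (Suc n) = H bs (Suc n) * x - 1"
proof -
  have "alt_rem bs x n = H bs n * x" by (rule rem_small[OF ab x Hn]) simp
  hence eq: "alt_beta bs n * alt_rem bs x n = H bs (Suc n) * x" by (simp add: H_Suc)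
  have "\<lfloor>H bs (Suc n) * x\<rfloor> = 1" using l u by (simp add: floor_eq_iff)
  thus ?thesis using eq by simp
qed


lemma exists_one:
  assumes ab: "alt_base bs" and g: "0 < g" and s: "s < length bs"
  shows "\<exists>x y n (k::int). x \<in> \<rat> \<and> 0 \<le> x \<and> x < g \<and> y \<in> \<rat> \<and> 0 \<le> y \<and> y < g \<and>
      n mod length bs = s \<and> 1 = of_int k * alt_rem bs x n - alt_rem bs y n"
proof -
  define p where "p = length bs"
  have p0: "p > 0" using ab unfolding alt_base_def p_def by auto
  define b where "b = Min (set bs)"
  have b1: "b > 1" using min_gt1[OF ab] b_def by simp
  obtain K where K: "2/g < b ^ K" using real_arch_pow[OF b1] by blast
  define n0 where "n0 = K*p + (p + s - 1)"
  have modn: "Suc n0 mod p = s"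
  proof -
    have "Suc n0 = (p + s) + K * p" using p0 unfolding n0_def by simp
    hence "Suc n0 mod p = (p + s) mod p" by simp
    also have "\<dots> = s" using s p_def by simp
    finally show ?thesis .
  qed
  define A where "A = H bs n0"
  define B where "B = H bs (Suc n0)"
  have A0: "A > 0" using H_pos[OF ab] A_def by simp
  have "b ^ K \<le> b ^ (K*p)" using b1 p0 by (intro power_increasing) auto
  also have "\<dots> \<le> H bs (K*p)" using H_ge_pow[OF ab] b_def by simp
  also have "\<dots> \<le> A" unfolding A_def n0_def by (rule H_mono[OF ab]) simp
  finally have Ag: "2/g < A" using K by simp
  have BA: "B = A * alt_beta bs n0" by (simp add: A_def B_def H_Suc)
  have AB: "A < B" using BA A0 beta_gt1[OF ab, of n0] by simp
  have B0: "B > 0" using A0 AB by simp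
  define u where "u = min (1/A) (2/B)"
  have u1: "1/B < u" unfolding u_def using AB A0 B0 by (simp add: frac_less2 divide_strict_right_mono)
  obtain q :: nat where q: "max B (1/(u - 1/B)) < real q" using reals_Archimedean2 by blast
  have qB: "B < real q" and q0: "real q > 0" using q B0 by auto
  have q1: "1 / real q < u - 1/B"
  proof -
    have "1/(u - 1/B) < real q" using q by simp
    thus ?thesis using u1 q0 by (simp add: field_simps)
  qed
  define m where "m = nat \<lceil>real q / B\<rceil>"
  have mq: "real m = of_int \<lceil>real q / B\<rceil>" unfolding m_def using q0 B0
    by (simp add: order.strict_implies_order)
  have m_lo: "real q / B \<le> real m" using mq by simp
  have m_hi: "real m < real q / B + 1" using mq by linarith
  define y where "y = real m / real q"
  define x where "x = 1 / real q"
  have By: "1 \<le> B * y" using m_lo q0 B0 unfolding y_def by (simp add: field_simps)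
  have yu: "y < u"
  proof -
    have "y < (real q / B + 1) / real q" unfolding y_def using m_hi q0 by (simp add: divide_strict_right_mono)
    also have "\<dots> = 1/B + 1/real q" using q0 B0 by (simp add: field_simps)
    finally show ?thesis using q1 by simp
  qed
  have y0: "y \<ge> 0" unfolding y_def by simp
  have Ay: "A * y < 1"
  proof -
    have "A * y < A * (1/A)" using yu A0 unfolding u_def by (intro mult_strict_left_mono) auto
    thus ?thesis using A0 by simp
  qed
  have By2: "B * y < 2"
  proof -
    have "B * y < B * (2/B)" using yu B0 unfolding u_def by (intro mult_strict_left_mono) auto
    thus ?thesis using B0 by simp
  qed
  have ry: "alt_rem bs y (Suc n0) = B * y - 1"
    using rem_one[OF ab y0, of n0] Ay By By2 unfolding A_def B_def by simp
  have Bx: "H bs (Suc n0) * x < 1" using qB q0 unfolding x_def B_def[symmetric] by (simp add: field_simps)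
  have rx: "alt_rem bs x (Suc n0) = B * x"
    using rem_small[OF ab _ Bx, of "Suc n0"] unfolding B_def by (simp add: x_def del: alt_rem.simps)
  have key: "1 = of_int (int m) * alt_rem bs x (Suc n0) - alt_rem bs y (Suc n0)"
    unfolding rx ry using q0 by (simp add: x_def y_def field_simps)
  have ug: "u < g"
  proof -
    have "1/A < g" using Ag A0 g by (simp add: field_simps)
    thus ?thesis unfolding u_def by (simp add: min_less_iff_disj)
  qed
  have "1/B > 0" using B0 by simp
  hence "x < g" using q1 u1 ug unfolding x_def by linarith
  moreover have "y < g" using yu ug by simp
  moreover have "x \<in> \<rat>" "y \<in> \<rat>" unfolding x_def y_def by (auto intro: Rats_divide)
  ultimately show ?thesis using key modn y0 p_def unfolding x_def
    by (intro exI[of _ x] exI[of _ y] exI[of _ "Suc n0"] exI[of _ "int m"]) (auto simp: x_def)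
qed


lemma zspan_zero: "0 \<in> zspan G"
  unfolding zspan_def by (auto intro!: exI[of _ "\<lambda>_. 0"])

lemma zspan_gen: assumes "finite G" "g \<in> G" shows "g \<in> zspan G"
proof -
  have "(\<Sum>h\<in>G. of_int (if h = g then 1 else 0) * h) = (\<Sum>h\<in>G. if h = g then h else 0)"
    by (intro sum.cong) auto
  also have "\<dots> = g" using assms by simp
  finally show ?thesis unfolding zspan_def by (auto intro!: exI[of _ "\<lambda>h. if h = g then 1 else 0"])
qed

lemma zspan_add: assumes "a \<in> zspan G" "b \<in> zspan G" shows "a + b \<in> zspan G"
proof -
  obtain c1 c2 where "a = (\<Sum>g\<in>G. of_int (c1 g) * g)" "b = (\<Sum>g\<in>G. of_int (c2 g) * g)"
    using assms unfolding zspan_def by blast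
  hence "a + b = (\<Sum>g\<in>G. of_int (c1 g + c2 g) * g)" by (simp add: sum.distrib distrib_right)
  thus ?thesis unfolding zspan_def by (intro CollectI exI[of _ "\<lambda>g. c1 g + c2 g"])
qed

lemma zspan_smult: assumes "a \<in> zspan G" shows "of_int k * a \<in> zspan G"
proof -
  obtain c1 where "a = (\<Sum>g\<in>G. of_int (c1 g) * g)"
    using assms unfolding zspan_def by blast
  hence "of_int k * a = (\<Sum>g\<in>G. of_int (k * c1 g) * g)" by (simp add: sum_distrib_left mult.assoc)
  thus ?thesis unfolding zspan_def by (intro CollectI exI[of _ "\<lambda>g. k * c1 g"])
qed

lemma zspan_diff: assumes "a \<in> zspan G" "b \<in> zspan G" shows "a - b \<in> zspan G"
  using zspan_add[OF assms(1) zspan_smult[OF assms(2), of "-1"]] by simp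

lemma zspan_sum: "(\<And>i. i \<in> A \<Longrightarrow> f i \<in> zspan KK) \<Longrightarrow> sum f A \<in> zspan KK"
proof (induction A rule: infinite_finite_induct)
  case (infinite A) thus ?case by (simp add: zspan_zero)
next
  case empty thus ?case by (simp add: zspan_zero)
next
  case (insert a A) thus ?case by (simp add: zspan_add)
qed

lemma zspan_lin: assumes "\<And>g. g \<in> G \<Longrightarrow> d * g \<in> zspan KK" "y \<in> zspan G"
  shows "d * y \<in> zspan KK"
proof -
  obtain c where "y = (\<Sum>g\<in>G. of_int (c g) * g)" using assms(2) unfolding zspan_def by blast
  hence "d * y = (\<Sum>g\<in>G. of_int (c g) * (d * g))" by (simp add: sum_distrib_left algebra_simps)
  also have "\<dots> \<in> zspan KK" by (intro zspan_sum zspan_smult assms(1))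
  finally show ?thesis .
qed

lemma zspan_allzero: assumes "\<And>g. g \<in> G \<Longrightarrow> g = 0" "y \<in> zspan G" shows "y = 0"
  using assms unfolding zspan_def by (auto intro!: sum.neutral)

theorem lemma3:
  fixes bs :: "real list" and \<gamma> :: real
  assumes "alt_base bs"
    and "\<gamma> > 0"
    and "\<And>x. x \<in> \<rat> \<Longrightarrow> 0 \<le> x \<Longrightarrow> x < \<gamma> \<Longrightarrow> x < 1 \<Longrightarrow> eventually_periodic (alt_digit bs x)"
  shows "algebraic_int (prod_list bs)"
proof -
  note ab = assms(1)
  define p where "p = length bs"
  have p0: "p > 0" using ab unfolding alt_base_def p_def by auto
  define g where "g = min \<gamma> 1"
  have g0: "g > 0" using assms(2) by (simp add: g_def)
  define valid where "valid x \<longleftrightarrow> x \<in> \<rat> \<and> 0 \<le> x \<and> x < g" for x :: real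
  have "\<forall>s\<in>{..<p}. \<exists>xy. valid (fst xy) \<and> valid (snd xy) \<and> (\<exists>n (k::int). n mod p = s \<and>
           1 = of_int k * alt_rem bs (fst xy) n - alt_rem bs (snd xy) n)"
  proof
    fix s assume "s \<in> {..<p}"
    then obtain x y n k where "x \<in> \<rat> \<and> 0 \<le> x \<and> x < g \<and> y \<in> \<rat> \<and> 0 \<le> y \<and> y < g \<and>
      n mod length bs = s \<and> 1 = of_int k * alt_rem bs x n - alt_rem bs y n"
      using exists_one[OF ab g0, of s] p_def by auto
    thus "\<exists>xy. valid (fst xy) \<and> valid (snd xy) \<and> (\<exists>n (k::int). n mod p = s \<and>
           1 = of_int k * alt_rem bs (fst xy) n - alt_rem bs (snd xy) n)"
      unfolding valid_def p_def by (intro exI[of _ "(x,y)"]) auto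
  qed
  then obtain f where f: "\<forall>s\<in>{..<p}. valid (fst (f s)) \<and> valid (snd (f s)) \<and> (\<exists>n (k::int). n mod p = s \<and>
           1 = of_int k * alt_rem bs (fst (f s)) n - alt_rem bs (snd (f s)) n)"
    by (metis (no_types) bchoice)
  define X where "X = (fst \<circ> f) ` {..<p} \<union> (snd \<circ> f) ` {..<p}"
  have Xfin: "finite X" unfolding X_def by simp
  have Xv: "valid x" if "x \<in> X" for x using that f unfolding X_def by auto
  define R where "R s = {alt_rem bs x n | x n. x \<in> X \<and> n mod p = s}" for s
  have Rfin: "finite (R s)" for s
  proof -
    have "R s \<subseteq> (\<Union>x\<in>X. range (alt_rem bs x))" unfolding R_def by auto
    moreover have "finite (\<Union>x\<in>X. range (alt_rem bs x))"
    proof (intro finite_UN_I Xfin)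
      fix x assume "x \<in> X"
      hence v: "valid x" by (rule Xv)
      hence "x < \<gamma>" "x < 1" "0 \<le> x" "x \<in> \<rat>" unfolding valid_def g_def by auto
      thus "finite (range (alt_rem bs x))" using rem_periodic[OF ab] assms(3) by blast
    qed
    ultimately show ?thesis using finite_subset by blast
  qed
  have one: "1 \<in> zspan (R s)" if "s < p" for s
  proof -
    have "\<exists>n (k::int). n mod p = s \<and> 1 = of_int k * alt_rem bs (fst (f s)) n - alt_rem bs (snd (f s)) n"
      using bspec[OF f, of s] that by blast
    then obtain n k where nk: "n mod p = s" "1 = of_int k * alt_rem bs (fst (f s)) n - alt_rem bs (snd (f s)) n"
      by blast
    have "fst (f s) \<in> X" "snd (f s) \<in> X" using that unfolding X_def by auto
    hence "alt_rem bs (fst (f s)) n \<in> R s" "alt_rem bs (snd (f s)) n \<in> R s"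
      unfolding R_def using nk by auto
    hence "alt_rem bs (fst (f s)) n \<in> zspan (R s)" "alt_rem bs (snd (f s)) n \<in> zspan (R s)"
      using zspan_gen Rfin by auto
    hence "of_int k * alt_rem bs (fst (f s)) n - alt_rem bs (snd (f s)) n \<in> zspan (R s)"
      by (intro zspan_diff zspan_smult)
    thus ?thesis using nk(2) by simp
  qed
  have step: "alt_beta bs j * r \<in> zspan (R (Suc j mod p))" if r_in: "r \<in> R (j mod p)" for j r
  proof -
    obtain x n where xn: "r = alt_rem bs x n" "x \<in> X" "n mod p = j mod p" using r_in unfolding R_def by auto
    have bj: "alt_beta bs j = alt_beta bs n" by (rule beta_cong) (use xn in \<open>simp add: p_def\<close>)
    have sm: "Suc n mod p = Suc j mod p" using xn(3) by (metis mod_Suc_eq)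
    have "alt_rem bs x (Suc n) \<in> R (Suc j mod p)" unfolding R_def using xn sm by (intro CollectI exI[of _ x] exI[of _ "Suc n"]) simp
    hence a: "alt_rem bs x (Suc n) \<in> zspan (R (Suc j mod p))" using zspan_gen Rfin by auto
    have "of_int (alt_digit bs x n) * 1 \<in> zspan (R (Suc j mod p))"
      by (intro zspan_smult one) (use p0 in simp)
    hence "alt_rem bs x (Suc n) + of_int (alt_digit bs x n) \<in> zspan (R (Suc j mod p))"
      using zspan_add[OF a] by (simp del: alt_rem.simps)
    moreover have "alt_beta bs j * r = alt_rem bs x (Suc n) + of_int (alt_digit bs x n)"
      using rem_step[of bs n x] bj xn(1) by (simp del: alt_rem.simps)
    ultimately show ?thesis by simp
  qed
  have comp: "H bs j * y \<in> zspan (R (j mod p))" if "y \<in> zspan (R 0)" for j y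
  proof (induction j)
    case 0 thus ?case using that by (simp add: H_def)
  next
    case (Suc j)
    have "alt_beta bs j * (H bs j * y) \<in> zspan (R (Suc j mod p))"
      by (rule zspan_lin[OF step Suc])
    moreover have "H bs (Suc j) * y = alt_beta bs j * (H bs j * y)" by (simp add: H_Suc mult_ac)
    ultimately show ?case by metis
  qed
  have Hp: "H bs p = prod_list bs"
  proof -
    have "H bs p = (\<Prod>i\<in>{0..<p}. bs ! i)" unfolding H_def alt_beta_def p_def
      by (intro prod.cong) auto
    thus ?thesis by (simp add: prod.list_conv_set_nth p_def)
  qed
  have cl: "prod_list bs * r \<in> zspan (R 0)" if "r \<in> R 0" for r
    using comp[of r p] zspan_gen[OF Rfin that] Hp by simp
  have "\<not> (\<forall>g\<in>R 0. g = 0)"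
  proof
    assume "\<forall>g\<in>R 0. g = 0"
    hence "(1::real) = 0" using zspan_allzero[OF _ one[OF p0]] by blast
    thus False by simp
  qed
  then obtain g0 where "g0 \<in> R 0" "g0 \<noteq> 0" by blast
  thus ?thesis using module_algebraic_int[OF Rfin cl] by blast
qed

end
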